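(* Let $\mathbf{Y}|\mathbf{X}=\mathbf{x}\sim\mathcal{N}(\mathbf{x},\sigma^2\mathbf{I}_n)$ with $\sigma>0$, with transition density $f_{\mathbf{Y}|\mathbf{X}}$. Consider the maximum likelihood estimator of $\vec{\mathbf{X}}$ from $\vec{\mathbf{Y}}=\vec{\mathbf{y}}$, $$\hat{\boldsymbol{\ell}}_{\mathrm{MLE}}(\vec{\mathbf{y}})\in\arg\max_{\mathbf{t}\in\vec{\mathbb{R}}_n}\sum_{\pi\in\mathcal{P}}f_{\mathbf{Y}|\mathbf{X}}(\mathbf{P}_\pi\vec{\mathbf{y}}\,|\,\mathbf{t}).$$ Then the MLE is given by $$\hat{\boldsymbol{\ell}}_{\mathrm{MLE}}(\vec{\mathbf{y}})\in\left\{\mathbf{t}\in\vec{\mathbb{R}}_n:\ \sum_{\pi\in\mathcal{P}}\mathbf{P}_\pi\vec{\mathbf{y}}\,e^{\frac{(\mathbf{P}_\pi\vec{\mathbf{y}})^T\mathbf{t}}{\sigma^2}}=\mathbf{t}\sum_{\pi\in\mathcal{P}}e^{\frac{(\mathbf{P}_\pi\vec{\mathbf{y}})^T\mathbf{t}}{\sigma^2}}\right\},$$ and if this set is empty one sets $\hat{\boldsymbol{\ell}}_{\mathrm{MLE}}(\vec{\mathbf{y}})=\vec{\mathbf{y}}$.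
   Context: For $\mathbf{v}\in\mathbb{R}^n$, $\vec{\mathbf{v}}$ is $\mathbf{v}$ sorted in ascending order. $\vec{\mathbb{R}}_n$ is the set of vectors in $\mathbb{R}^n$ whose entries are in ascending order. $\mathcal{P}$ is the set of permutations of $\{1,\dots,n\}$ and $\mathbf{P}_\pi$ the permutation matrix of $\pi$. *)

theory Defs
  imports "HOL-Probability.Distributions" "HOL-Combinatorics.Permutations"
begin

text \<open>Vectors in R^n are real lists of length n; entries indexed 0..n-1.\<close>

definition gauss_trans_density :: "real \<Rightarrow> real list \<Rightarrow> real list \<Rightarrow> real" where
  "gauss_trans_density \<sigma> y x = (\<Prod>i<length y. normal_density (x ! i) \<sigma> (y ! i))"

definition perm_vec :: "(nat \<Rightarrow> nat) \<Rightarrow> real list \<Rightarrow> real list" where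
  "perm_vec \<pi> v = map (\<lambda>i. v ! \<pi> i) [0..<length v]"

definition perms :: "nat \<Rightarrow> (nat \<Rightarrow> nat) set" where
  "perms n = {\<pi>. \<pi> permutes {..<n}}"

definition inner_list :: "real list \<Rightarrow> real list \<Rightarrow> real" where
  "inner_list a b = (\<Sum>j<length a. a ! j * b ! j)"

text \<open>The likelihood of t given the sorted observation ys.\<close>
definition perm_likelihood :: "real \<Rightarrow> real list \<Rightarrow> real list \<Rightarrow> real" where
  "perm_likelihood \<sigma> ys t = (\<Sum>\<pi>\<in>perms (length ys). gauss_trans_density \<sigma> (perm_vec \<pi> ys) t)"

definition sorted_vecs :: "nat \<Rightarrow> real list set" where
  "sorted_vecs n = {t. length t = n \<and> sorted t}"

end

theory Submission
  imports Defs
begin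

lemma perm_vec_nth: "j < length v \<Longrightarrow> perm_vec p v ! j = v ! p j"
  by (simp add: perm_vec_def)

lemma length_perm_vec[simp]: "length (perm_vec p v) = length v"
  by (simp add: perm_vec_def)

lemma inner_perm: "inner_list (perm_vec p v) s = (\<Sum>j<length v. v ! p j * s ! j)"
  by (simp add: inner_list_def perm_vec_nth)

lemma gauss_eq:
  assumes "length s = length v"
  shows "gauss_trans_density sg v s =
     (1 / sqrt (2 * pi * sg\<^sup>2)) ^ length v * exp (\<Sum>j<length v. -(v!j - s!j)\<^sup>2 / (2 * sg\<^sup>2))"
  by (simp add: gauss_trans_density_def normal_density_def exp_sum prod_dividef power_one_over)

lemma bij_comp_inv:
  assumes "q permutes S"
  shows "bij_betw (\<lambda>p. p \<circ> inv q) {p. p permutes S} {p. p permutes S}"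
proof (rule bij_betwI[where g="\<lambda>p. p \<circ> q"])
  show "(\<lambda>p. p \<circ> inv q) \<in> {p. p permutes S} \<rightarrow> {p. p permutes S}"
    using assms by (auto intro: permutes_compose permutes_inv)
  show "(\<lambda>p. p \<circ> q) \<in> {p. p permutes S} \<rightarrow> {p. p permutes S}"
    using assms by (auto intro: permutes_compose)
  show "\<And>x. x \<in> {p. p permutes S} \<Longrightarrow> x \<circ> inv q \<circ> q = x"
    using assms by (simp add: o_assoc[symmetric] permutes_inv_o)
  show "\<And>x. x \<in> {p. p permutes S} \<Longrightarrow> x \<circ> q \<circ> inv q = x"
    using assms by (simp add: o_assoc[symmetric] permutes_inv_o)
qed


theorem lemma2:
  fixes \<sigma> :: real and y t :: "real list"
  assumes "\<sigma> > 0"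
    and "t \<in> sorted_vecs (length y)"
    and "\<forall>s \<in> sorted_vecs (length y).
           perm_likelihood \<sigma> (sort y) s \<le> perm_likelihood \<sigma> (sort y) t"
  shows "\<forall>i < length y.
           (\<Sum>\<pi>\<in>perms (length y). perm_vec \<pi> (sort y) ! i
               * exp (inner_list (perm_vec \<pi> (sort y)) t / \<sigma>\<^sup>2))
         = t ! i * (\<Sum>\<pi>\<in>perms (length y). exp (inner_list (perm_vec \<pi> (sort y)) t / \<sigma>\<^sup>2))"
proof -
  define n where "n = length y"
  define ys where "ys = sort y"
  define P where "P = perms n"
  have lys: "length ys = n" by (simp add: ys_def n_def)
  have lt: "length t = n" using assms(2) by (simp add: sorted_vecs_def n_def)
  have sg: "\<sigma>\<^sup>2 > 0" using assms(1) by simp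
  define A where "A s = (\<Sum>p\<in>P. exp ((\<Sum>j<n. ys ! p j * s ! j) / \<sigma>\<^sup>2))" for s
  define N where "N s = (\<Sum>j<n. (s ! j)\<^sup>2 :: real)" for s
  define F where "F s = exp (- N s / (2 * \<sigma>\<^sup>2)) * A s" for s
  define K where "K = (1 / sqrt (2 * pi * \<sigma>\<^sup>2)) ^ n * exp (- N ys / (2 * \<sigma>\<^sup>2))"
  have Kpos: "K > 0" using sg by (simp add: K_def)
  have Leq: "perm_likelihood \<sigma> ys s = K * F s" if ls: "length s = n" for s
  proof -
    have "gauss_trans_density \<sigma> (perm_vec p ys) s
          = K * exp (- N s / (2 * \<sigma>\<^sup>2)) * exp ((\<Sum>j<n. ys ! p j * s ! j) / \<sigma>\<^sup>2)"
      if p: "p \<in> P" for p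
    proof -
      have pp: "p permutes {..<n}" using p by (simp add: P_def perms_def)
      have sq: "(\<Sum>j<n. (ys ! p j)\<^sup>2) = N ys"
        unfolding N_def using sum.permute[OF pp, of "\<lambda>j. (ys ! j)\<^sup>2"] by (simp add: o_def)
      have "(\<Sum>j<n. -(perm_vec p ys ! j - s ! j)\<^sup>2 / (2 * \<sigma>\<^sup>2))
          = (\<Sum>j<n. -(ys ! p j)\<^sup>2 / (2 * \<sigma>\<^sup>2) + (- (s ! j)\<^sup>2 / (2 * \<sigma>\<^sup>2)) + ys ! p j * s ! j / \<sigma>\<^sup>2)"
        using assms(1) lys by (intro sum.cong) (auto simp: perm_vec_nth field_simps power2_eq_square)
      also have "\<dots> = - N ys / (2 * \<sigma>\<^sup>2) + - N s / (2 * \<sigma>\<^sup>2) + (\<Sum>j<n. ys ! p j * s ! j) / \<sigma>\<^sup>2"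
        by (simp add: sum.distrib sum_subtractf sq N_def sum_divide_distrib[symmetric] sum_negf)
      finally have E: "(\<Sum>j<n. -(perm_vec p ys ! j - s ! j)\<^sup>2 / (2 * \<sigma>\<^sup>2)) = - N ys / (2 * \<sigma>\<^sup>2) + - N s / (2 * \<sigma>\<^sup>2) + (\<Sum>j<n. ys ! p j * s ! j) / \<sigma>\<^sup>2" .
      have "gauss_trans_density \<sigma> (perm_vec p ys) s = (1 / sqrt (2 * pi * \<sigma>\<^sup>2)) ^ n * exp (\<Sum>j<n. -(perm_vec p ys ! j - s ! j)\<^sup>2 / (2 * \<sigma>\<^sup>2))"
        using gauss_eq[of s "perm_vec p ys" \<sigma>] ls lys by simp
      also have "\<dots> = (1 / sqrt (2 * pi * \<sigma>\<^sup>2)) ^ n * exp (- N ys / (2 * \<sigma>\<^sup>2) + - N s / (2 * \<sigma>\<^sup>2) + (\<Sum>j<n. ys ! p j * s ! j) / \<sigma>\<^sup>2)"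
        by (simp only: E)
      also have "\<dots> = K * exp (- N s / (2 * \<sigma>\<^sup>2)) * exp ((\<Sum>j<n. ys ! p j * s ! j) / \<sigma>\<^sup>2)"
        unfolding K_def exp_add by (simp only: mult_ac)
      finally show ?thesis .
    qed
    then show ?thesis
      unfolding perm_likelihood_def F_def A_def lys P_def[symmetric]
      by (simp add: sum_distrib_left mult.assoc)
  qed
  have sym: "F (permute_list q s) = F s" if ls: "length s = n" and q: "q permutes {..<n}" for s q
  proof -
    have iq: "inv q permutes {..<n}" using q by (rule permutes_inv)
    have pn: "permute_list q s ! j = s ! q j" if "j < n" for j
      using permute_list_nth[of q s j] q ls that by simp
    have N1: "N (permute_list q s) = N s"
      unfolding N_def using sum.permute[OF q, of "\<lambda>j. (s ! j)\<^sup>2"] ls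
      by (simp add: o_def pn)
    have E1: "(\<Sum>j<n. ys ! p j * permute_list q s ! j) = (\<Sum>j<n. ys ! (p \<circ> inv q) j * s ! j)" for p
    proof -
      have "(\<Sum>j<n. ys ! p j * permute_list q s ! j) = (\<Sum>j<n. ys ! p j * s ! q j)"
        by (intro sum.cong) (auto simp: pn)
      also have "\<dots> = (\<Sum>j<n. ys ! p (inv q j) * s ! q (inv q j))"
        using sum.permute[OF iq, of "\<lambda>j. ys ! p j * s ! q j"] by (simp add: o_def)
      also have "\<dots> = (\<Sum>j<n. ys ! (p \<circ> inv q) j * s ! j)"
        using permutes_inverses(1)[OF q] by simp
      finally show ?thesis .
    qed
    have A1: "A (permute_list q s) = A s"
    proof -
      have "A (permute_list q s) = (\<Sum>p\<in>P. exp ((\<Sum>j<n. ys ! (p \<circ> inv q) j * s ! j) / \<sigma>\<^sup>2))"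
        unfolding A_def E1 ..
      also have "\<dots> = A s"
        unfolding A_def P_def perms_def
        by (rule sum.reindex_bij_betw[OF bij_comp_inv[OF q], of "\<lambda>p. exp ((\<Sum>j<n. ys ! p j * s ! j) / \<sigma>\<^sup>2)"])
      finally show ?thesis .
    qed
    show ?thesis unfolding F_def N1 A1 ..
  qed
  have Fmax: "F s \<le> F t" if ls: "length s = n" for s
  proof -
    obtain q where q: "q permutes {..<length s}" "permute_list q s = sort s"
      by (rule mset_eq_permutation[of "sort s" s]) simp
    have "sort s \<in> sorted_vecs (length y)" using ls by (simp add: sorted_vecs_def n_def)
    then have "perm_likelihood \<sigma> ys (sort s) \<le> perm_likelihood \<sigma> ys t"
      using assms(3) by (simp add: ys_def)
    then have "K * F (sort s) \<le> K * F t" using Leq ls lt by simp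
    then have "F (sort s) \<le> F t" using Kpos by simp
    moreover have "F (sort s) = F s" using sym[OF ls] q ls by metis
    ultimately show ?thesis by simp
  qed
  show ?thesis
  proof (intro allI impI)
    fix i assume "i < length y"
    then have i: "i < n" by (simp add: n_def)
    define v where "v h = map (\<lambda>j. t ! j + (if j = i then 1 else 0) * h) [0..<n]" for h
    have lv: "length (v h) = n" for h by (simp add: v_def)
    have vn: "j < n \<Longrightarrow> v h ! j = t ! j + (if j = i then 1 else 0) * h" for h j
      by (simp add: v_def)
    have v0: "v 0 = t" using lt by (intro nth_equalityI) (auto simp: lv vn)
    define E where "E p = (\<Sum>j<n. ys ! p j * t ! j)" for p
    define g where "g h = exp (- (N t + 2 * t ! i * h + h\<^sup>2) / (2 * \<sigma>\<^sup>2))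
        * (\<Sum>p\<in>P. exp ((E p + ys ! p i * h) / \<sigma>\<^sup>2))" for h
    have N1: "N (v h) = N t + 2 * t ! i * h + h\<^sup>2" for h
    proof -
      have "N (v h) = (\<Sum>j<n. (t ! j)\<^sup>2 + (if j = i then 2 * t ! i * h + h\<^sup>2 else 0))"
        unfolding N_def by (intro sum.cong) (auto simp: vn power2_eq_square algebra_simps)
      also have "\<dots> = N t + 2 * t ! i * h + h\<^sup>2"
        using i by (simp add: sum.distrib N_def)
      finally show ?thesis .
    qed
    have E1: "(\<Sum>j<n. ys ! p j * v h ! j) = E p + ys ! p i * h" for p h
    proof -
      have "(\<Sum>j<n. ys ! p j * v h ! j) = (\<Sum>j<n. ys ! p j * t ! j + (if j = i then ys ! p i * h else 0))"
        by (intro sum.cong) (auto simp: vn algebra_simps)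
      also have "\<dots> = E p + ys ! p i * h"
        using i by (simp add: sum.distrib E_def)
      finally show ?thesis .
    qed
    have gF: "g h = F (v h)" for h
      unfolding g_def F_def A_def by (simp add: N1 E1)
    define D where "D = exp (- N t / (2 * \<sigma>\<^sup>2)) * (- t ! i / \<sigma>\<^sup>2) * A t
         + (\<Sum>p\<in>P. exp (E p / \<sigma>\<^sup>2) * (ys ! p i / \<sigma>\<^sup>2)) * exp (- N t / (2 * \<sigma>\<^sup>2))"
    have d1: "((\<lambda>h. exp (- (N t + 2 * t ! i * h + h\<^sup>2) / (2 * \<sigma>\<^sup>2))) has_real_derivative
                exp (- N t / (2 * \<sigma>\<^sup>2)) * (- t ! i / \<sigma>\<^sup>2)) (at 0)"
    proof -
      have "((\<lambda>h. - (N t + 2 * t ! i * h + h\<^sup>2) / (2 * \<sigma>\<^sup>2)) has_real_derivative (- t ! i / \<sigma>\<^sup>2)) (at 0)"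
        apply (rule derivative_eq_intros refl)+
        using assms(1) by (simp_all add: field_simps power2_eq_square)
      from DERIV_fun_exp[OF this] show ?thesis by simp
    qed
    have d2: "((\<lambda>h. \<Sum>p\<in>P. exp ((E p + ys ! p i * h) / \<sigma>\<^sup>2)) has_real_derivative
                (\<Sum>p\<in>P. exp (E p / \<sigma>\<^sup>2) * (ys ! p i / \<sigma>\<^sup>2))) (at 0)"
    proof (rule DERIV_sum)
      fix p
      have "((\<lambda>h. (E p + ys ! p i * h) / \<sigma>\<^sup>2) has_real_derivative (ys ! p i / \<sigma>\<^sup>2)) (at 0)"
        apply (rule derivative_eq_intros refl)+
        using assms(1) by (simp_all add: field_simps)
      from DERIV_fun_exp[OF this] show "((\<lambda>h. exp ((E p + ys ! p i * h) / \<sigma>\<^sup>2)) has_real_derivative exp (E p / \<sigma>\<^sup>2) * (ys ! p i / \<sigma>\<^sup>2)) (at 0)" by simp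
    qed
    have der: "(g has_real_derivative D) (at 0)"
    proof -
      have "(g has_real_derivative (exp (- N t / (2 * \<sigma>\<^sup>2)) * (- t ! i / \<sigma>\<^sup>2))
           * (\<Sum>p\<in>P. exp ((E p + ys ! p i * 0) / \<sigma>\<^sup>2))
           + (\<Sum>p\<in>P. exp (E p / \<sigma>\<^sup>2) * (ys ! p i / \<sigma>\<^sup>2)) *
             exp (- (N t + 2 * t ! i * 0 + 0\<^sup>2) / (2 * \<sigma>\<^sup>2))) (at 0)"
        unfolding g_def[abs_def] by (rule DERIV_mult[OF d1 d2])
      moreover have "A t = (\<Sum>p\<in>P. exp ((E p + ys ! p i * 0) / \<sigma>\<^sup>2))"
        by (simp add: A_def E_def)
      ultimately show ?thesis by (simp add: D_def)
    qed
    have "D = 0"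
      by (rule DERIV_local_max[OF der, of 1]) (auto simp: gF v0 lv Fmax)
    define S where "S = (\<Sum>p\<in>P. exp (E p / \<sigma>\<^sup>2) * ys ! p i)"
    have S': "(\<Sum>p\<in>P. exp (E p / \<sigma>\<^sup>2) * (ys ! p i / \<sigma>\<^sup>2)) = S / \<sigma>\<^sup>2"
      unfolding S_def sum_divide_distrib by simp
    have "D = exp (- N t / (2 * \<sigma>\<^sup>2)) / \<sigma>\<^sup>2 * (S - t ! i * A t)"
      unfolding D_def S' using sg by (simp add: field_simps)
    with \<open>D = 0\<close> sg have "S = t ! i * A t" by simp
    then have "(\<Sum>p\<in>P. exp ((\<Sum>j<n. ys ! p j * t ! j) / \<sigma>\<^sup>2) * ys ! p i) = t ! i * A t"
      by (simp add: S_def E_def)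
    moreover have "(\<Sum>p\<in>P. perm_vec p ys ! i * exp (inner_list (perm_vec p ys) t / \<sigma>\<^sup>2))
       = (\<Sum>p\<in>P. exp ((\<Sum>j<n. ys ! p j * t ! j) / \<sigma>\<^sup>2) * ys ! p i)"
      using i lys by (intro sum.cong) (auto simp: perm_vec_nth inner_perm)
    moreover have "(\<Sum>p\<in>P. exp (inner_list (perm_vec p ys) t / \<sigma>\<^sup>2)) = A t"
      using lys unfolding A_def by (simp add: inner_perm)
    ultimately show "(\<Sum>\<pi>\<in>perms (length y). perm_vec \<pi> (sort y) ! i
               * exp (inner_list (perm_vec \<pi> (sort y)) t / \<sigma>\<^sup>2))
         = t ! i * (\<Sum>\<pi>\<in>perms (length y). exp (inner_list (perm_vec \<pi> (sort y)) t / \<sigma>\<^sup>2))"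
      by (simp add: P_def ys_def n_def)
  qed
qed

end
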